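(* Fix all parameters of the cathode model ($h_1,h_2,\sigma_{\mathrm{el}},\sigma_{\mathrm{ion}},\rho_a,D_2,M,F,R,T,A,j_{\mathrm{cell}}>0,V_2,C^{\mathrm{bulk}}$). Let $h_1<h_b<h_b'<h_2$. There do not exist two triples with all of the following properties: 1. $(\phi^{I}_{\mathrm{el}},\phi^{I}_{\mathrm{ion}},C^{I})$ is a cathode solution in the modified formulation with active-layer boundary $h_b$. 2. $(\phi^{II}_{\mathrm{el}},\phi^{II}_{\mathrm{ion}},C^{II})$ is a cathode solution in the modified formulation with active-layer boundary $h_b'$. 3. Their signed quantities $s^{I}$ and $s^{II}$ are nonnegative on $[h_1,h_b]$ and $[h_1,h_b']$ respectively. 4. $s^{II}(h_b)>0$. 5. On $[h_1,h_b]$ the function $C^{II}-C^{I}$ is positive and nonincreasing. In other words, under these conditions the active-layer boundary cannot be enlarged from $h_b$ to $h_b'$ while keeping the cell current and boundary data fixed.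
   Context: Cathode model (isothermal, 1D). Fix real numbers $0<h_1<h_b<h_2$ and positive constants $\sigma_{\mathrm{el}},\sigma_{\mathrm{ion}}$ (effective electronic/ionic conductivities), $\rho_a$ (air density), $D_2$ (effective diffusion coefficient), $M$ (molar mass of $O_2$), $F$ (Faraday constant), $R$ (gas constant), $T$ (temperature), $A$ (reaction surface area per volume). Also fix $j_{\mathrm{cell}}>0$, $V_2\in\mathbb R$ and $C^{\mathrm{bulk}}\in(0,1)$. Charge-transfer current. For $y\in(h_1,h_b)$ set $$i(y)=A\,K\,\Big(\frac{\rho_a R T\,C(y)}{M}\Big)^{0.2}\Big[\exp\Big(\frac{1.2F\eta(y)}{RT}\Big)-\exp\Big(-\frac{F\eta(y)}{RT}\Big)\Big],\qquad K=1.47\cdot10^{6}\,e^{-85859/(RT)}.$$ Define the signed quantity $$s(y)=\phi_{\mathrm{ion}}(y)-\phi_{\mathrm{el}}(y)-\frac{RT}{4F}\ln\frac{C^{\mathrm{bulk}}}{C(y)}.$$ The activation overpotential is $\eta=s$ in the classical formulation and $\eta=|s|$ in the modified formulation. A cathode solution with active-layer boundary $h_b$ is a triple $\phi_{\mathrm{el}},\phi_{\mathrm{ion}},C\in C^1([h_1,h_2])$ with the following properties. - Regularity: each function is $C^2$ on $[h_1,h_b]$ and on $[h_b,h_2]$, and $C>0$. - Equations on $(h_1,h_b)$: $(\sigma_{\mathrm{el}}\phi_{\mathrm{el}}')'=-i$, $(\sigma_{\mathrm{ion}}\phi_{\mathrm{ion}}')'=i$ and $(\rho_aD_2C')'=\frac{M}{4F}i$.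 - Equations on $(h_b,h_2)$: all three left-hand sides vanish. - Boundary conditions: $-\sigma_{\mathrm{el}}\phi_{\mathrm{el}}'(h_2)=j_{\mathrm{cell}}$, $\phi_{\mathrm{ion}}'(h_2)=0$, $\phi_{\mathrm{el}}(h_2)=V_2$, $C(h_2)=C^{\mathrm{bulk}}$, $\phi_{\mathrm{el}}'(h_1)=0$, $-\sigma_{\mathrm{ion}}\phi_{\mathrm{ion}}'(h_1)=j_{\mathrm{cell}}$, $C'(h_1)=0$. - Interface condition: $s(h_b)=0$, i.e. $\eta(h_b)=0$. In the claim, $s^{I}$ and $s^{II}$ denote the signed quantity $s$ computed from the respective triple. *)

theory Defs
  imports "HOL-Analysis.Analysis"
begin

record cathode_params =
  h1 :: real
  h2 :: real
  sigma_el :: real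
  sigma_ion :: real
  rho_a :: real
  D2 :: real
  Mm :: real      (* molar mass of O2 *)
  Fc :: real
  Rg :: real
  Tt :: real
  Aa :: real      (* reaction surface area per volume *)
  j_cell :: real
  V2 :: real
  C_bulk :: real

definition params_ok :: "cathode_params \<Rightarrow> bool" where
  "params_ok P \<longleftrightarrow> 0 < h1 P \<and> h1 P < h2 P \<and> 0 < sigma_el P \<and> 0 < sigma_ion P \<and>
     0 < rho_a P \<and> 0 < D2 P \<and> 0 < Mm P \<and> 0 < Fc P \<and> 0 < Rg P \<and> 0 < Tt P \<and> 0 < Aa P \<and>
     0 < j_cell P \<and> 0 < C_bulk P \<and> C_bulk P < 1"

definition K_rate :: "cathode_params \<Rightarrow> real" where
  "K_rate P = (147 / 100) * 10 ^ 6 * exp (- 85859 / (Rg P * Tt P))"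

definition i_ct :: "cathode_params \<Rightarrow> real \<Rightarrow> real \<Rightarrow> real" where
  "i_ct P c eta = Aa P * K_rate P * ((rho_a P * Rg P * Tt P * c / Mm P) powr (1/5)) *
     (exp ((6/5) * Fc P * eta / (Rg P * Tt P)) - exp (- Fc P * eta / (Rg P * Tt P)))"

definition s_fun :: "cathode_params \<Rightarrow> (real \<Rightarrow> real) \<Rightarrow> (real \<Rightarrow> real) \<Rightarrow> (real \<Rightarrow> real) \<Rightarrow> real \<Rightarrow> real" where
  "s_fun P phel phion C y = phion y - phel y - Rg P * Tt P / (4 * Fc P) * ln (C_bulk P / C y)"

definition pw_C2 :: "real \<Rightarrow> real \<Rightarrow> real \<Rightarrow> (real \<Rightarrow> real) \<Rightarrow> (real \<Rightarrow> real) \<Rightarrow> (real \<Rightarrow> real) \<Rightarrow> (real \<Rightarrow> real) \<Rightarrow> bool" where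
  "pw_C2 a hb b f f' g1 g2 \<longleftrightarrow>
     continuous_on {a..b} f' \<and>
     (\<forall>x\<in>{a..b}. (f has_real_derivative f' x) (at x within {a..b})) \<and>
     (\<forall>x\<in>{a..hb}. (f' has_real_derivative g1 x) (at x within {a..hb})) \<and>
     (\<forall>x\<in>{hb..b}. (f' has_real_derivative g2 x) (at x within {hb..b})) \<and>
     continuous_on {a..hb} g1 \<and> continuous_on {hb..b} g2"

text \<open>Cathode solution with active-layer boundary hb; the overpotential is eta_of (s),
  i.e. eta_of = id for the classical and eta_of = abs for the modified formulation.\<close>
definition cathode_solution ::
  "cathode_params \<Rightarrow> (real \<Rightarrow> real) \<Rightarrow> real \<Rightarrow> (real \<Rightarrow> real) \<Rightarrow> (real \<Rightarrow> real) \<Rightarrow> (real \<Rightarrow> real) \<Rightarrow> bool" where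
  "cathode_solution P eta_of hb phel phion C \<longleftrightarrow>
     (\<exists>phel' phel1 phel2 phion' phion1 phion2 C' C1 C2.
        pw_C2 (h1 P) hb (h2 P) phel phel' phel1 phel2 \<and>
        pw_C2 (h1 P) hb (h2 P) phion phion' phion1 phion2 \<and>
        pw_C2 (h1 P) hb (h2 P) C C' C1 C2 \<and>
        (\<forall>y\<in>{h1 P..h2 P}. C y > 0) \<and>
        (\<forall>y\<in>{h1 P<..<hb}.
           let i = i_ct P (C y) (eta_of (s_fun P phel phion C y)) in
           sigma_el P * phel1 y = - i \<and>
           sigma_ion P * phion1 y = i \<and>
           rho_a P * D2 P * C1 y = Mm P / (4 * Fc P) * i) \<and>
        (\<forall>y\<in>{hb<..<h2 P}. sigma_el P * phel2 y = 0 \<and> sigma_ion P * phion2 y = 0 \<and>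
                            rho_a P * D2 P * C2 y = 0) \<and>
        - sigma_el P * phel' (h2 P) = j_cell P \<and>
        phion' (h2 P) = 0 \<and>
        phel (h2 P) = V2 P \<and>
        C (h2 P) = C_bulk P \<and>
        phel' (h1 P) = 0 \<and>
        - sigma_ion P * phion' (h1 P) = j_cell P \<and>
        C' (h1 P) = 0 \<and>
        s_fun P phel phion C hb = 0)"

abbreviation modified_solution where
  "modified_solution P \<equiv> cathode_solution P abs"

end

theory Submission
  imports Defs
begin

lemma mvtR:
  fixes f f' :: "real \<Rightarrow> real"
  assumes "a < b" "\<And>x. x\<in>{a..b} \<Longrightarrow> (f has_real_derivative f' x) (at x within {a..b})"
  shows "\<exists>x\<in>{a<..<b}. f b - f a = f' x * (b - a)"
  using mvt_simple[of a b f "\<lambda>x. (*) (f' x)"] assms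
  by (auto simp: has_field_derivative_def)

lemma der_const:
  fixes f f' :: "real \<Rightarrow> real"
  assumes "a \<le> y" "\<And>x. x\<in>{a..y} \<Longrightarrow> (f has_real_derivative f' x) (at x within {a..y})"
    "\<And>x. x\<in>{a<..<y} \<Longrightarrow> f' x = 0"
  shows "f y = f a"
proof (cases "a = y")
  case False
  then have "a < y" using assms(1) by simp
  from mvtR[OF this assms(2)] assms(3) show ?thesis by auto
qed simp

lemma der_mono:
  fixes f f' :: "real \<Rightarrow> real"
  assumes "a \<le> y" "\<And>x. x\<in>{a..y} \<Longrightarrow> (f has_real_derivative f' x) (at x within {a..y})"
    "\<And>x. x\<in>{a<..<y} \<Longrightarrow> f' x \<ge> 0"
  shows "f a \<le> f y"
proof (cases "a = y")
  case False
  then have "a < y" using assms(1) by simp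
  from mvtR[OF this assms(2)] obtain x where "x\<in>{a<..<y}" "f y - f a = f' x * (y - a)" by auto
  with assms(3)[of x] \<open>a < y\<close> show ?thesis by (smt (verit) mult_nonneg_nonneg)
qed simp

lemma der_antimono:
  fixes f f' :: "real \<Rightarrow> real"
  assumes "a \<le> y" "\<And>x. x\<in>{a..y} \<Longrightarrow> (f has_real_derivative f' x) (at x within {a..y})"
    "\<And>x. x\<in>{a<..<y} \<Longrightarrow> f' x \<le> 0"
  shows "f y \<le> f a"
proof -
  have "(-f a) \<le> (-f y)"
    using der_mono[of a y "\<lambda>x. - f x" "\<lambda>x. - f' x"] assms
    by (auto intro: derivative_intros)
  then show ?thesis by simp
qed

lemma der_strict:
  fixes f f' :: "real \<Rightarrow> real"
  assumes "a < y" "\<And>x. x\<in>{a..y} \<Longrightarrow> (f has_real_derivative f' x) (at x within {a..y})"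
    "\<And>x. x\<in>{a<..<y} \<Longrightarrow> f' x > 0"
  shows "f a < f y"
proof -
  from mvtR[OF assms(1,2)] obtain x where "x\<in>{a<..<y}" "f y - f a = f' x * (y - a)" by auto
  with assms(3)[of x] \<open>a < y\<close> show ?thesis by (smt (verit) mult_pos_pos)
qed

lemma K_pos: "K_rate P > 0" unfolding K_rate_def by simp

lemma i_nonneg:
  assumes "params_ok P" "c > 0" "eta \<ge> 0"
  shows "i_ct P c eta \<ge> 0"
proof -
  have RT: "Rg P * Tt P > 0" "Fc P > 0" "Aa P > 0" using assms(1) by (auto simp: params_ok_def)
  have "- Fc P * eta / (Rg P * Tt P) \<le> (6/5) * Fc P * eta / (Rg P * Tt P)"
    using RT assms(3) by (intro divide_right_mono) (auto simp: mult_nonneg_nonneg)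
  then have "exp ((6/5) * Fc P * eta / (Rg P * Tt P)) - exp (- Fc P * eta / (Rg P * Tt P)) \<ge> 0" by simp
  then show ?thesis unfolding i_ct_def using RT K_pos[of P]
    by (intro mult_nonneg_nonneg) auto
qed

lemma i_strict:
  assumes "params_ok P" "0 < c1" "c1 < c2" "0 \<le> e1" "e1 < e2"
  shows "i_ct P c1 e1 < i_ct P c2 e2"
proof -
  have RT: "Rg P * Tt P > 0" "Fc P > 0" "Aa P > 0" "rho_a P > 0" "Mm P > 0"
    using assms(1) by (auto simp: params_ok_def)
  define E where "E = (\<lambda>eta. exp ((6/5) * Fc P * eta / (Rg P * Tt P)) - exp (- Fc P * eta / (Rg P * Tt P)))"
  define B where "B = (\<lambda>c. (rho_a P * Rg P * Tt P * c / Mm P) powr (1/5))"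
  have a1: "(6/5) * Fc P * e1 / (Rg P * Tt P) < (6/5) * Fc P * e2 / (Rg P * Tt P)"
    using RT assms by (intro divide_strict_right_mono) auto
  have a2: "- Fc P * e2 / (Rg P * Tt P) < - Fc P * e1 / (Rg P * Tt P)"
    using RT assms by (intro divide_strict_right_mono) auto
  have E12: "E e1 < E e2" unfolding E_def
    using exp_less_mono[OF a1] exp_less_mono[OF a2] by linarith
  have a3: "- Fc P * e1 / (Rg P * Tt P) \<le> (6/5) * Fc P * e1 / (Rg P * Tt P)"
    using RT assms by (intro divide_right_mono) (auto simp: mult_nonneg_nonneg)
  have E1: "E e1 \<ge> 0" unfolding E_def using a3 by simp
  have b0: "0 < rho_a P * Rg P * Tt P * c1 / Mm P" using RT assms
    by (metis divide_pos_pos mult.assoc mult_pos_pos)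
  have "(rho_a P * (Rg P * Tt P)) * c1 < (rho_a P * (Rg P * Tt P)) * c2"
    using RT assms by (intro mult_strict_left_mono) auto
  then have b1: "rho_a P * Rg P * Tt P * c1 / Mm P < rho_a P * Rg P * Tt P * c2 / Mm P"
    using RT by (intro divide_strict_right_mono) (auto simp: mult.assoc)
  have B12: "B c1 < B c2" unfolding B_def using b0 b1 by (intro powr_less_mono2) auto
  have B1: "B c1 \<ge> 0" unfolding B_def by simp
  have "B c1 * E e1 \<le> B c1 * E e2" using B1 E12 by (intro mult_left_mono) auto
  also have "\<dots> < B c2 * E e2" using B12 E12 E1 by (intro mult_strict_right_mono) auto
  finally have "B c1 * E e1 < B c2 * E e2" .
  then have "(Aa P * K_rate P) * (B c1 * E e1) < (Aa P * K_rate P) * (B c2 * E e2)"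
    using RT K_pos[of P] by (intro mult_strict_left_mono) auto
  then show ?thesis unfolding i_ct_def B_def E_def by (simp add: mult.assoc)
qed

lemma s_deriv:
  assumes "params_ok P" "C y > 0"
    "(phel has_real_derivative e) (at y within S)"
    "(phion has_real_derivative n) (at y within S)"
    "(C has_real_derivative cd) (at y within S)"
  shows "(s_fun P phel phion C has_real_derivative
           (n - e + Rg P * Tt P / (4 * Fc P) * (cd / C y))) (at y within S)"
proof -
  have p: "C_bulk P > 0" "Fc P > 0" using assms(1) by (auto simp: params_ok_def)
  have eq: "s_fun P phel phion C = (\<lambda>y. phion y - phel y - Rg P * Tt P / (4 * Fc P) * ln (C_bulk P / C y))"
    by (rule ext) (simp add: s_fun_def)
  show ?thesis unfolding eq
    using p assms(2)
    by (auto intro!: derivative_eq_intros assms(3-5) simp: field_simps power2_eq_square)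
qed

lemma sol_lemma:
  assumes ok: "params_ok P" and sol: "cathode_solution P abs hb phel phion C"
    and c: "h1 P < c" "c \<le> hb" "hb < h2 P"
  obtains e n cd c1 where
   "\<And>x. x\<in>{h1 P..h2 P} \<Longrightarrow> (phel has_real_derivative e x) (at x within {h1 P..h2 P})"
   "\<And>x. x\<in>{h1 P..h2 P} \<Longrightarrow> (phion has_real_derivative n x) (at x within {h1 P..h2 P})"
   "\<And>x. x\<in>{h1 P..h2 P} \<Longrightarrow> (C has_real_derivative cd x) (at x within {h1 P..h2 P})"
   "\<And>x. x\<in>{h1 P..c} \<Longrightarrow> (cd has_real_derivative c1 x) (at x within {h1 P..c})"
   "\<And>y. y\<in>{h1 P<..<c} \<Longrightarrow> rho_a P * D2 P * c1 y = Mm P / (4 * Fc P) * i_ct P (C y) \<bar>s_fun P phel phion C y\<bar>"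
   "\<And>y. y\<in>{h1 P..c} \<Longrightarrow> sigma_el P * e y + sigma_ion P * n y = - j_cell P"
   "\<And>y. y\<in>{h1 P..c} \<Longrightarrow> rho_a P * D2 P * cd y + Mm P / (4 * Fc P) * sigma_el P * e y = 0"
   "\<And>y. y\<in>{h1 P..c} \<Longrightarrow> cd y \<ge> 0"
   "cd (h1 P) = 0"
   "\<And>y. y\<in>{h1 P..h2 P} \<Longrightarrow> C y > 0"
proof -
  from sol obtain e e1 e2 n n1 n2 cd c1 c2 where
    pe: "pw_C2 (h1 P) hb (h2 P) phel e e1 e2" and
    pn: "pw_C2 (h1 P) hb (h2 P) phion n n1 n2" and
    pc: "pw_C2 (h1 P) hb (h2 P) C cd c1 c2" and
    Cpos: "\<forall>y\<in>{h1 P..h2 P}. C y > 0" and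
    eqs: "\<forall>y\<in>{h1 P<..<hb}.
           let i = i_ct P (C y) (abs (s_fun P phel phion C y)) in
           sigma_el P * e1 y = - i \<and>
           sigma_ion P * n1 y = i \<and>
           rho_a P * D2 P * c1 y = Mm P / (4 * Fc P) * i" and
    bc: "e (h1 P) = 0" "- sigma_ion P * n (h1 P) = j_cell P" "cd (h1 P) = 0"
    unfolding cathode_solution_def by blast
  have p: "sigma_el P > 0" "sigma_ion P > 0" "rho_a P > 0" "D2 P > 0" "Mm P > 0" "Fc P > 0"
    using ok by (auto simp: params_ok_def)
  have de: "\<And>x y. x\<in>{h1 P..y} \<Longrightarrow> y \<le> hb \<Longrightarrow> (e has_real_derivative e1 x) (at x within {h1 P..y})"
    by (rule DERIV_subset[where s="{h1 P..hb}"]) (use pe in \<open>auto simp: pw_C2_def\<close>)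
  have dn: "\<And>x y. x\<in>{h1 P..y} \<Longrightarrow> y \<le> hb \<Longrightarrow> (n has_real_derivative n1 x) (at x within {h1 P..y})"
    by (rule DERIV_subset[where s="{h1 P..hb}"]) (use pn in \<open>auto simp: pw_C2_def\<close>)
  have dc: "\<And>x y. x\<in>{h1 P..y} \<Longrightarrow> y \<le> hb \<Longrightarrow> (cd has_real_derivative c1 x) (at x within {h1 P..y})"
    by (rule DERIV_subset[where s="{h1 P..hb}"]) (use pc in \<open>auto simp: pw_C2_def\<close>)
  have eq: "\<And>y. y\<in>{h1 P<..<hb} \<Longrightarrow> sigma_el P * e1 y = - i_ct P (C y) (abs (s_fun P phel phion C y)) \<and>
           sigma_ion P * n1 y = i_ct P (C y) (abs (s_fun P phel phion C y)) \<and>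
           rho_a P * D2 P * c1 y = Mm P / (4 * Fc P) * i_ct P (C y) (abs (s_fun P phel phion C y))"
    using eqs by (auto simp: Let_def)
  have cons1: "sigma_el P * e y + sigma_ion P * n y = - j_cell P" if y: "y \<in> {h1 P..c}" for y
  proof -
    have "sigma_el P * e y + sigma_ion P * n y = sigma_el P * e (h1 P) + sigma_ion P * n (h1 P)"
    proof (rule der_const[where f = "\<lambda>x. sigma_el P * e x + sigma_ion P * n x" and f' = "\<lambda>x. sigma_el P * e1 x + sigma_ion P * n1 x"])
      show "h1 P \<le> y" using y by auto
      fix x assume "x \<in> {h1 P..y}"
      then show "((\<lambda>x. sigma_el P * e x + sigma_ion P * n x) has_real_derivative sigma_el P * e1 x + sigma_ion P * n1 x) (at x within {h1 P..y})"
        using y c by (auto intro!: derivative_eq_intros de dn)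
    next
      fix x assume "x \<in> {h1 P<..<y}"
      then show "sigma_el P * e1 x + sigma_ion P * n1 x = 0" using eq[of x] y c by auto
    qed
    then show ?thesis using bc by simp
  qed
  have cons2: "rho_a P * D2 P * cd y + Mm P / (4 * Fc P) * sigma_el P * e y = 0" if y: "y \<in> {h1 P..c}" for y
  proof -
    have "rho_a P * D2 P * cd y + Mm P / (4 * Fc P) * sigma_el P * e y =
          rho_a P * D2 P * cd (h1 P) + Mm P / (4 * Fc P) * sigma_el P * e (h1 P)"
    proof (rule der_const[where f = "\<lambda>x. rho_a P * D2 P * cd x + Mm P / (4 * Fc P) * sigma_el P * e x" and f' = "\<lambda>x. rho_a P * D2 P * c1 x + Mm P / (4 * Fc P) * sigma_el P * e1 x"])
      show "h1 P \<le> y" using y by auto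
      fix x assume "x \<in> {h1 P..y}"
      then show "((\<lambda>x. rho_a P * D2 P * cd x + Mm P / (4 * Fc P) * sigma_el P * e x) has_real_derivative
          rho_a P * D2 P * c1 x + Mm P / (4 * Fc P) * sigma_el P * e1 x) (at x within {h1 P..y})"
        using y c p by (auto intro!: derivative_eq_intros de dc)
    next
      fix x assume "x \<in> {h1 P<..<y}"
      then have "sigma_el P * e1 x = - i_ct P (C x) (abs (s_fun P phel phion C x))"
          "rho_a P * D2 P * c1 x = Mm P / (4 * Fc P) * i_ct P (C x) (abs (s_fun P phel phion C x))"
        using eq[of x] y c by auto
      then show "rho_a P * D2 P * c1 x + Mm P / (4 * Fc P) * sigma_el P * e1 x = 0"
        by (simp add: mult.assoc)
    qed
    then show ?thesis using bc by simp
  qed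
  have cdnn: "cd y \<ge> 0" if y: "y \<in> {h1 P..c}" for y
  proof -
    have "cd (h1 P) \<le> cd y"
    proof (rule der_mono[where f = cd and f' = c1])
      show "h1 P \<le> y" using y by auto
      fix x assume "x \<in> {h1 P..y}"
      then show "(cd has_real_derivative c1 x) (at x within {h1 P..y})" using y c dc by auto
    next
      fix x assume x: "x \<in> {h1 P<..<y}"
      then have "rho_a P * D2 P * c1 x = Mm P / (4 * Fc P) * i_ct P (C x) (abs (s_fun P phel phion C x))"
        using eq[of x] y c by auto
      moreover have "i_ct P (C x) (abs (s_fun P phel phion C x)) \<ge> 0"
        using i_nonneg[OF ok] Cpos x y c by auto
      ultimately have "rho_a P * D2 P * c1 x \<ge> 0" using p by simp
      then show "c1 x \<ge> 0" using p by (metis mult_pos_pos not_le zero_le_mult_iff)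
    qed
    then show ?thesis using bc by simp
  qed
  show ?thesis
  proof
    show "\<And>x. x\<in>{h1 P..h2 P} \<Longrightarrow> (phel has_real_derivative e x) (at x within {h1 P..h2 P})"
      using pe unfolding pw_C2_def by auto
    show "\<And>x. x\<in>{h1 P..h2 P} \<Longrightarrow> (phion has_real_derivative n x) (at x within {h1 P..h2 P})"
      using pn unfolding pw_C2_def by auto
    show "\<And>x. x\<in>{h1 P..h2 P} \<Longrightarrow> (C has_real_derivative cd x) (at x within {h1 P..h2 P})"
      using pc unfolding pw_C2_def by auto
    show "\<And>x. x\<in>{h1 P..c} \<Longrightarrow> (cd has_real_derivative c1 x) (at x within {h1 P..c})"
      using dc c by auto
    show "\<And>y. y\<in>{h1 P<..<c} \<Longrightarrow> rho_a P * D2 P * c1 y = Mm P / (4 * Fc P) * i_ct P (C y) \<bar>s_fun P phel phion C y\<bar>"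
      using eq c by auto
    show "cd (h1 P) = 0" by (fact bc(3))
    show "\<And>y. y\<in>{h1 P..h2 P} \<Longrightarrow> C y > 0" using Cpos by auto
    show "\<And>y. y\<in>{h1 P..c} \<Longrightarrow> sigma_el P * e y + sigma_ion P * n y = - j_cell P" by (fact cons1)
    show "\<And>y. y\<in>{h1 P..c} \<Longrightarrow> rho_a P * D2 P * cd y + Mm P / (4 * Fc P) * sigma_el P * e y = 0" by (fact cons2)
    show "\<And>y. y\<in>{h1 P..c} \<Longrightarrow> cd y \<ge> 0" by (fact cdnn)
  qed
qed

theorem mainTheorem5:
  fixes P :: cathode_params and hb hb' :: real
  assumes "params_ok P"
    and "h1 P < hb" and "hb < hb'" and "hb' < h2 P"
  shows "\<not> (\<exists>phelI phionI CI phelII phionII CII.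
           modified_solution P hb phelI phionI CI \<and>
           modified_solution P hb' phelII phionII CII \<and>
           (\<forall>y\<in>{h1 P..hb}. s_fun P phelI phionI CI y \<ge> 0) \<and>
           (\<forall>y\<in>{h1 P..hb'}. s_fun P phelII phionII CII y \<ge> 0) \<and>
           s_fun P phelII phionII CII hb > 0 \<and>
           (\<forall>y\<in>{h1 P..hb}. CII y - CI y > 0) \<and>
           (\<forall>x\<in>{h1 P..hb}. \<forall>y\<in>{h1 P..hb}. x \<le> y \<longrightarrow> CII y - CI y \<le> CII x - CI x))"
proof
  assume "\<exists>phelI phionI CI phelII phionII CII.
           modified_solution P hb phelI phionI CI \<and>
           modified_solution P hb' phelII phionII CII \<and>
           (\<forall>y\<in>{h1 P..hb}. s_fun P phelI phionI CI y \<ge> 0) \<and>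
           (\<forall>y\<in>{h1 P..hb'}. s_fun P phelII phionII CII y \<ge> 0) \<and>
           s_fun P phelII phionII CII hb > 0 \<and>
           (\<forall>y\<in>{h1 P..hb}. CII y - CI y > 0) \<and>
           (\<forall>x\<in>{h1 P..hb}. \<forall>y\<in>{h1 P..hb}. x \<le> y \<longrightarrow> CII y - CI y \<le> CII x - CI x)"
  then obtain phelI phionI CI phelII phionII CII where
    solI: "modified_solution P hb phelI phionI CI" and
    solII: "modified_solution P hb' phelII phionII CII" and
    sI: "\<forall>y\<in>{h1 P..hb}. s_fun P phelI phionI CI y \<ge> 0" and
    sII: "\<forall>y\<in>{h1 P..hb'}. s_fun P phelII phionII CII y \<ge> 0" and
    sIIb: "s_fun P phelII phionII CII hb > 0" and
    dpos: "\<forall>y\<in>{h1 P..hb}. CII y - CI y > 0" and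
    dmon: "\<forall>x\<in>{h1 P..hb}. \<forall>y\<in>{h1 P..hb}. x \<le> y \<longrightarrow> CII y - CI y \<le> CII x - CI x"
    by blast
  note ok = assms(1)
  have p: "sigma_el P > 0" "sigma_ion P > 0" "rho_a P > 0" "D2 P > 0" "Mm P > 0" "Fc P > 0"
    "Rg P > 0" "Tt P > 0"
    using ok by (auto simp: params_ok_def)
  have hbh2: "hb < h2 P" using assms by simp
  obtain eI nI cdI c1I where
    deI: "\<And>x. x\<in>{h1 P..h2 P} \<Longrightarrow> (phelI has_real_derivative eI x) (at x within {h1 P..h2 P})" and
    dnI: "\<And>x. x\<in>{h1 P..h2 P} \<Longrightarrow> (phionI has_real_derivative nI x) (at x within {h1 P..h2 P})" and
    dCI: "\<And>x. x\<in>{h1 P..h2 P} \<Longrightarrow> (CI has_real_derivative cdI x) (at x within {h1 P..h2 P})" and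
    dcI: "\<And>x. x\<in>{h1 P..hb} \<Longrightarrow> (cdI has_real_derivative c1I x) (at x within {h1 P..hb})" and
    eqI: "\<And>y. y\<in>{h1 P<..<hb} \<Longrightarrow> rho_a P * D2 P * c1I y = Mm P / (4 * Fc P) * i_ct P (CI y) \<bar>s_fun P phelI phionI CI y\<bar>" and
    c1I: "\<And>y. y\<in>{h1 P..hb} \<Longrightarrow> sigma_el P * eI y + sigma_ion P * nI y = - j_cell P" and
    c2I: "\<And>y. y\<in>{h1 P..hb} \<Longrightarrow> rho_a P * D2 P * cdI y + Mm P / (4 * Fc P) * sigma_el P * eI y = 0" and
    cnI: "\<And>y. y\<in>{h1 P..hb} \<Longrightarrow> cdI y \<ge> 0" and
    h1I: "cdI (h1 P) = 0" and
    CIpos: "\<And>y. y\<in>{h1 P..h2 P} \<Longrightarrow> CI y > 0"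
    by (rule sol_lemma[OF ok solI assms(2) order_refl hbh2], rule that)
  obtain eII nII cdII c1II where
    deII: "\<And>x. x\<in>{h1 P..h2 P} \<Longrightarrow> (phelII has_real_derivative eII x) (at x within {h1 P..h2 P})" and
    dnII: "\<And>x. x\<in>{h1 P..h2 P} \<Longrightarrow> (phionII has_real_derivative nII x) (at x within {h1 P..h2 P})" and
    dCII: "\<And>x. x\<in>{h1 P..h2 P} \<Longrightarrow> (CII has_real_derivative cdII x) (at x within {h1 P..h2 P})" and
    dcII: "\<And>x. x\<in>{h1 P..hb} \<Longrightarrow> (cdII has_real_derivative c1II x) (at x within {h1 P..hb})" and
    eqII: "\<And>y. y\<in>{h1 P<..<hb} \<Longrightarrow> rho_a P * D2 P * c1II y = Mm P / (4 * Fc P) * i_ct P (CII y) \<bar>s_fun P phelII phionII CII y\<bar>" and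
    c1II: "\<And>y. y\<in>{h1 P..hb} \<Longrightarrow> sigma_el P * eII y + sigma_ion P * nII y = - j_cell P" and
    c2II: "\<And>y. y\<in>{h1 P..hb} \<Longrightarrow> rho_a P * D2 P * cdII y + Mm P / (4 * Fc P) * sigma_el P * eII y = 0" and
    cnII: "\<And>y. y\<in>{h1 P..hb} \<Longrightarrow> cdII y \<ge> 0" and
    h1II: "cdII (h1 P) = 0" and
    CIIpos: "\<And>y. y\<in>{h1 P..h2 P} \<Longrightarrow> CII y > 0"
    by (rule sol_lemma[OF ok solII assms(2) less_imp_le[OF assms(3)] assms(4)], rule that)
  have dneg: "cdII y - cdI y \<le> 0" if y: "y \<in> {h1 P<..<hb}" for y
  proof (rule ccontr)
    assume "\<not> cdII y - cdI y \<le> 0"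
    then have pos: "cdII y - cdI y > 0" by simp
    have yy: "h1 P < y" "y < h2 P" using y assms by auto
    have "((\<lambda>x. CII x - CI x) has_real_derivative cdII y - cdI y) (at y within {h1 P..h2 P})"
      using y assms by (auto intro!: derivative_eq_intros dCII dCI)
    then have "DERIV (\<lambda>x. CII x - CI x) y :> cdII y - cdI y"
      using at_within_Icc_at[OF yy] by simp
    from DERIV_pos_inc_right[OF this pos] obtain \<delta> where
      \<delta>: "\<delta> > 0" "\<And>h. h > 0 \<Longrightarrow> h < \<delta> \<Longrightarrow> CII y - CI y < CII (y + h) - CI (y + h)" by blast
    define h where "h = min (\<delta>/2) ((hb - y)/2)"
    have h0: "h \<le> (hb - y)/2" "h \<le> \<delta>/2" unfolding h_def by (rule min.cobounded2, rule min.cobounded1)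
    have h: "h > 0" "h < \<delta>" "y + h \<le> hb" using \<delta> y h0 by (auto simp: h_def)
    have "CII (y + h) - CI (y + h) \<le> CII y - CI y" using dmon y h by auto
    with \<delta>(2)[OF h(1,2)] show False by simp
  qed
  \<comment> \<open>g = sII - sI is nonincreasing, hence positive\<close>
  have gpos: "s_fun P phelII phionII CII x > s_fun P phelI phionI CI x" if x: "x \<in> {h1 P<..<hb}" for x
  proof -
    let ?g = "\<lambda>z. s_fun P phelII phionII CII z - s_fun P phelI phionI CI z"
    let ?k = "Rg P * Tt P / (4 * Fc P)"
    have "?g hb \<le> ?g x"
    proof (rule der_antimono[where f = ?g and f' = "\<lambda>z. (nII z - eII z + ?k * (cdII z / CII z)) - (nI z - eI z + ?k * (cdI z / CI z))"])
      show "x \<le> hb" using x by auto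
    next
      fix z assume z: "z \<in> {x..hb}"
      then have z': "z \<in> {h1 P..h2 P}" using x assms by auto
      have sub: "{x..hb} \<subseteq> {h1 P..h2 P}" using x assms by auto
      show "(?g has_real_derivative (nII z - eII z + ?k * (cdII z / CII z)) - (nI z - eI z + ?k * (cdI z / CI z))) (at z within {x..hb})"
        by (intro derivative_intros s_deriv[OF ok] CIpos CIIpos z' DERIV_subset[OF _ sub]
            deI dnI dCI deII dnII dCII)
    next
      fix z assume z: "z \<in> {x<..<hb}"
      then have zz: "z \<in> {h1 P..hb}" "z \<in> {h1 P<..<hb}" using x by auto
      have dz: "cdII z \<le> cdI z" using dneg[OF zz(2)] by simp
      have e1: "sigma_el P * eI z = - (rho_a P * D2 P * cdI z) / (Mm P / (4 * Fc P))"
        using c2I[OF zz(1)] p by (simp add: field_simps)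
      have e2: "sigma_el P * eII z = - (rho_a P * D2 P * cdII z) / (Mm P / (4 * Fc P))"
        using c2II[OF zz(1)] p by (simp add: field_simps)
      have "rho_a P * D2 P * cdII z \<le> rho_a P * D2 P * cdI z"
        using dz p by (intro mult_left_mono) auto
      then have "sigma_el P * eI z \<le> sigma_el P * eII z"
        unfolding e1 e2 using p by (intro divide_right_mono) auto
      then have E: "eI z \<le> eII z" using p by simp
      have "sigma_ion P * nII z \<le> sigma_ion P * nI z"
        using c1I[OF zz(1)] c1II[OF zz(1)] \<open>sigma_el P * eI z \<le> sigma_el P * eII z\<close> by linarith
      then have N: "nII z \<le> nI z" using p by simp
      have CC: "CI z < CII z" using dpos zz by auto
      have Cp: "CI z > 0" "CII z > 0" using CIpos CIIpos zz assms by auto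
      have "cdII z / CII z \<le> cdI z / CII z" using dz Cp by (intro divide_right_mono) auto
      also have "\<dots> \<le> cdI z / CI z" using cnI[OF zz(1)] Cp CC by (intro divide_left_mono) auto
      finally have "cdII z / CII z \<le> cdI z / CI z" .
      then have "?k * (cdII z / CII z) \<le> ?k * (cdI z / CI z)" using p by (intro mult_left_mono) auto
      then show "(nII z - eII z + ?k * (cdII z / CII z)) - (nI z - eI z + ?k * (cdI z / CI z)) \<le> 0"
        using E N by linarith
    qed
    moreover have "?g hb > 0" using sIIb s_fun_def
    proof -
      have "s_fun P phelI phionI CI hb = 0"
        using solI unfolding cathode_solution_def by blast
      then show ?thesis using sIIb by simp
    qed
    ultimately show ?thesis by simp
  qed
  define m where "m = (h1 P + hb) / 2"
  have m: "m \<in> {h1 P<..<hb}" using assms by (auto simp: m_def)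
  have "cdII (h1 P) - cdI (h1 P) < cdII m - cdI m"
  proof (rule der_strict[where f = "\<lambda>z. cdII z - cdI z" and f' = "\<lambda>z. c1II z - c1I z"])
    show "h1 P < m" using m by auto
  next
    fix x assume x: "x \<in> {h1 P..m}"
    have sub: "{h1 P..m} \<subseteq> {h1 P..hb}" using m by auto
    have x': "x \<in> {h1 P..hb}" using x m by auto
    show "((\<lambda>z. cdII z - cdI z) has_real_derivative c1II x - c1I x) (at x within {h1 P..m})"
      by (intro derivative_intros DERIV_subset[OF _ sub] dcI dcII x')
  next
    fix x assume x: "x \<in> {h1 P<..<m}"
    then have xx: "x \<in> {h1 P<..<hb}" "x \<in> {h1 P..hb}" "x \<in> {h1 P..hb'}" using m assms by auto
    have s0: "s_fun P phelI phionI CI x \<ge> 0" using sI xx by auto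
    have s1: "s_fun P phelII phionII CII x \<ge> 0" using sII xx by auto
    have "i_ct P (CI x) \<bar>s_fun P phelI phionI CI x\<bar> < i_ct P (CII x) \<bar>s_fun P phelII phionII CII x\<bar>"
      using i_strict[OF ok, of "CI x" "CII x" "s_fun P phelI phionI CI x" "s_fun P phelII phionII CII x"]
        s0 s1 gpos[OF xx(1)] CIpos[of x] dpos xx assms by auto
    then have "Mm P / (4 * Fc P) * i_ct P (CI x) \<bar>s_fun P phelI phionI CI x\<bar> <
               Mm P / (4 * Fc P) * i_ct P (CII x) \<bar>s_fun P phelII phionII CII x\<bar>"
      using p by (intro mult_strict_left_mono) auto
    then have "rho_a P * D2 P * c1I x < rho_a P * D2 P * c1II x"
      using eqI[OF xx(1)] eqII[OF xx(1)] by simp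
    then show "c1II x - c1I x > 0" using p
      by (metis diff_gt_0_iff_gt mult_less_cancel_left_pos mult_pos_pos)
  qed
  then have "cdII m - cdI m > 0" using h1I h1II by simp
  with dneg[OF m] show False by simp
qed

end
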